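(* Let $G$ be a graph with an assignment $L$ of lists of colours to its edges, and let $v_1v_2$ and $w_1w_2$ be two edges of $G$ that share no endpoint. Suppose $$|L(v_1v_2)|\,|L(w_1w_2)| \;>\; \sum_{\substack{i,j\in\{1,2\}\\ v_iw_j\in E(G)}} \left\lfloor \frac{|L(v_iw_j)|}{2}\right\rfloor \left\lceil \frac{|L(v_iw_j)|}{2}\right\rceil .$$ Then there exist colours $c_1\in L(v_1v_2)$ and $c_2\in L(w_1w_2)$ that are compatible.
   Context: For edges $e,f$ of $G$ and colours $c_1\in L(e)$, $c_2\in L(f)$, the colours $c_1,c_2$ are called compatible if $c_1=c_2$, or if for every edge $g$ that is adjacent to (shares an endpoint with) both $e$ and $f$, the list $L(g)$ contains at most one of $c_1$ and $c_2$. *)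

theory Defs
  imports Complex_Main
begin

definition simple_graph :: "'a set set \<Rightarrow> bool" where
  "simple_graph E \<longleftrightarrow> (\<forall>e\<in>E. \<exists>x y. x \<noteq> y \<and> e = {x, y})"

definition edges_adjacent :: "'a set \<Rightarrow> 'a set \<Rightarrow> bool" where
  "edges_adjacent g e \<longleftrightarrow> g \<noteq> e \<and> g \<inter> e \<noteq> {}"

definition compatible :: "'a set set \<Rightarrow> ('a set \<Rightarrow> 'c set) \<Rightarrow> 'a set \<Rightarrow> 'a set \<Rightarrow> 'c \<Rightarrow> 'c \<Rightarrow> bool" where
  "compatible E L e f c1 c2 \<longleftrightarrow>
     c1 \<in> L e \<and> c2 \<in> L f \<and>
     (c1 = c2 \<or> (\<forall>g\<in>E. edges_adjacent g e \<and> edges_adjacent g f \<longrightarrow> \<not> (c1 \<in> L g \<and> c2 \<in> L g)))"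

end

theory Submission
  imports Defs
begin

lemma prod_bound: fixes a b n :: nat assumes "a+b \<le> n"
  shows "int a * int b \<le> int (n div 2) * int (n - n div 2)"
proof -
  define k where "k = int (n div 2)"
  have nk: "int (n - n div 2) = int n - k" unfolding k_def by simp
  have kk: "int n - k = k \<or> int n - k = k + 1" unfolding k_def by presburger
  have "int a * int b \<le> int a * (int n - int a)" using assms by (intro mult_left_mono) auto
  also have "\<dots> \<le> k * (int n - k)"
  proof -
    have "(k - int a) * (int n - k - int a) \<ge> 0"
    proof (cases "int a \<le> k")
      case True thus ?thesis using kk by (intro mult_nonneg_nonneg) auto
    next
      case False thus ?thesis using kk by (intro mult_nonpos_nonpos) auto
    qed
    thus ?thesis by (simp add: algebra_simps)
  qed
  finally show ?thesis using nk by simp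
qed
lemma fl: "\<lfloor>real n / 2\<rfloor> = int (n div 2)"
  by (metis floor_divide_of_nat_eq of_nat_numeral)
lemma cl: "\<lceil>real n / 2\<rceil> = int (n - n div 2)"
proof (cases "even n")
  case True then obtain m where "n = 2*m" by auto
  thus ?thesis by simp
next
  case False then obtain m where "n = 2*m+1" using oddE by blast
  thus ?thesis by (simp add: ceiling_eq_iff)
qed

theorem lemma9:
  fixes E :: "'a set set" and L :: "'a set \<Rightarrow> 'c set" and v1 v2 w1 w2 :: 'a
  assumes "simple_graph E"
    and "\<And>e. e \<in> E \<Longrightarrow> finite (L e)"
    and "{v1, v2} \<in> E" and "{w1, w2} \<in> E"
    and "{v1, v2} \<inter> {w1, w2} = {}"
    and "real (card (L {v1, v2}) * card (L {w1, w2})) >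
         (\<Sum>(x, y) \<in> {(x, y). x \<in> {v1, v2} \<and> y \<in> {w1, w2} \<and> {x, y} \<in> E}.
            real_of_int (\<lfloor>real (card (L {x, y})) / 2\<rfloor> * \<lceil>real (card (L {x, y})) / 2\<rceil>))"
  shows "\<exists>c1 c2. c1 \<in> L {v1, v2} \<and> c2 \<in> L {w1, w2} \<and> compatible E L {v1, v2} {w1, w2} c1 c2"

proof -
  let ?e = "{v1, v2}" and ?f = "{w1, w2}"
  define A where "A = L ?e"
  define B where "B = L ?f"
  define P where "P = {(x, y). x \<in> {v1, v2} \<and> y \<in> {w1, w2} \<and> {x, y} \<in> E}"
  define S where "S = (\<lambda>(x,y). (A \<inter> L {x,y}) \<times> (B \<inter> L {x,y}))"
  have fA: "finite A" and fB: "finite B" using assms(2-4) unfolding A_def B_def by auto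
  show ?thesis
  proof (rule ccontr)
    assume nc: "\<not> ?thesis"
    have AB: "A \<inter> B = {}"
    proof (rule ccontr)
      assume "A \<inter> B \<noteq> {}"
      then obtain c where "c \<in> A" "c \<in> B" by auto
      thus False using nc unfolding A_def B_def compatible_def by auto
    qed
    have fP: "finite P"
    proof -
      have "P \<subseteq> {v1, v2} \<times> {w1, w2}" unfolding P_def by auto
      thus ?thesis by (rule finite_subset) auto
    qed
    have sub: "A \<times> B \<subseteq> (\<Union>p\<in>P. S p)"
    proof
      fix q assume q: "q \<in> A \<times> B"
      then obtain c1 c2 where qc: "q = (c1, c2)" "c1 \<in> A" "c2 \<in> B" by auto
      have "c1 \<noteq> c2" using AB qc by auto
      with nc qc obtain g where g: "g \<in> E" "edges_adjacent g ?e" "edges_adjacent g ?f"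
        "c1 \<in> L g" "c2 \<in> L g"
        unfolding compatible_def A_def B_def by blast
      obtain a b where ab: "a \<noteq> b" "g = {a, b}" using g(1) assms(1) unfolding simple_graph_def by blast
      have "\<exists>x y. x \<in> ?e \<and> y \<in> ?f \<and> g = {x, y}"
        using g(2,3) ab assms(5) unfolding edges_adjacent_def by blast
      then obtain x y where xy: "x \<in> ?e" "y \<in> ?f" "g = {x, y}" by blast
      have "(x, y) \<in> P" using xy g(1) unfolding P_def by auto
      moreover have "q \<in> S (x, y)" using qc g xy unfolding S_def by auto
      ultimately show "q \<in> (\<Union>p\<in>P. S p)" by blast
    qed
    have "card (A \<times> B) \<le> card (\<Union>p\<in>P. S p)"
      by (rule card_mono) (use fP fA fB sub in \<open>auto simp: S_def\<close>)
    also have "\<dots> \<le> (\<Sum>p\<in>P. card (S p))" using fP by (rule card_UN_le)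
    finally have c1: "real (card A * card B) \<le> (\<Sum>p\<in>P. real (card (S p)))"
      unfolding of_nat_sum[symmetric] of_nat_le_iff by (simp add: card_cartesian_product)
    have "(\<Sum>p\<in>P. real (card (S p))) \<le> (\<Sum>(x, y)\<in>P.
            real_of_int (\<lfloor>real (card (L {x, y})) / 2\<rfloor> * \<lceil>real (card (L {x, y})) / 2\<rceil>))"
    proof (rule sum_mono)
      fix p assume "p \<in> P"
      then obtain x y where p: "p = (x, y)" "{x,y} \<in> E" unfolding P_def by auto
      let ?g = "L {x,y}"
      have fg: "finite ?g" using assms(2) p by auto
      have "card (A \<inter> ?g) + card (B \<inter> ?g) = card ((A \<inter> ?g) \<union> (B \<inter> ?g))"
        using fg AB by (intro card_Un_disjoint[symmetric]) auto
      also have "\<dots> \<le> card ?g" using fg by (intro card_mono) auto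
      finally have "int (card (A \<inter> ?g)) * int (card (B \<inter> ?g)) \<le> int (card ?g div 2) * int (card ?g - card ?g div 2)"
        by (rule prod_bound)
      hence "real (card (A \<inter> ?g) * card (B \<inter> ?g)) \<le> real_of_int (int (card ?g div 2) * int (card ?g - card ?g div 2))"
        by (metis of_int_le_iff of_int_of_nat_eq of_nat_mult)
      thus "real (card (S p)) \<le> (case p of (x, y) \<Rightarrow>
            real_of_int (\<lfloor>real (card (L {x, y})) / 2\<rfloor> * \<lceil>real (card (L {x, y})) / 2\<rceil>))"
        using p by (simp add: S_def card_cartesian_product fl cl)
    qed
    with c1 assms(6) show False unfolding A_def B_def P_def by linarith
  qed
qed

end
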